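(* Let $\Gamma\in\mathcal{H}$ and let $f\in P^\Gamma$. Then $\Gamma$ is the homothety type of a generalized rotation set of $f$.
   Context: $\mathbb{T}^2=\mathbb{R}^2/\mathbb{Z}^2$, $R_\theta(x)=x+\theta$; $\overline{\mathcal{O}}^{\infty}(\mathbb{T}^2)$ is the $C^\infty$-closure of $\{h\circ R_\theta\circ h^{-1}: h\in\mathrm{Diff}^\infty(\mathbb{T}^2),\theta\in\mathbb{T}^2\}$. $\mathcal{H}$ is the set of non-empty compact subsets of $\mathbb{R}^2$ modulo translations and positive-ratio homotheties. $d_H$ is the Hausdorff distance. For $r>0$, $K\in\mathcal{LA}_r(\Gamma)$ means $\mathrm{diam}(K)>r$ and some $\hat\Gamma\in\Gamma$ of diameter $1$ satisfies $d_H(K/\mathrm{diam}(K),\hat\Gamma)<1/r$. Let $D=[0,1]^2$ and fix $\tilde x_0\in D$. For $k\in\mathbb{N}^*$, $P_k^\Gamma=\{f\in\overline{\mathcal{O}}^{\infty}(\mathbb{T}^2): \exists n\in\mathbb{N}^*,\ \tilde f^n(D)\in\mathcal{LA}_k(\Gamma)\}$, where $\tilde f$ is a lift of $f$ (the condition does not depend on the lift), and $P^\Gamma=\bigcap_{k\ge1}P_k^\Gamma$. For a lift $\tilde f$ of $f$, a generalized rotation set of $f$ is a Hausdorff limit $\lim_{i}\frac{\tilde f^{n_i}(D)-\tilde f^{n_i}(\tilde x_0)}{\mathrm{diam}(\tilde f^{n_i}(D))}$ along some sequence of natural numbers $(n_i)$ with $\mathrm{diam}(\tilde f^{n_i}(D))\to+\infty$.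 *)

theory Defs
  imports "HOL-Analysis.Analysis"
begin

section \<open>Integer lattice, lifts of torus maps\<close>

definition Z2 :: "(real^2) set" where
  "Z2 = {m. \<forall>i. m $ i \<in> \<int>}"

text \<open>Iterated directional (Frechet) derivatives of a map of the plane.\<close>
fun dirderiv :: "(real^2 \<Rightarrow> real^2) \<Rightarrow> (real^2) list \<Rightarrow> real^2 \<Rightarrow> real^2" where
  "dirderiv F [] = F"
| "dirderiv F (v # vs) = (\<lambda>x. frechet_derivative (dirderiv F vs) (at x) v)"

text \<open>C-infinity: all iterated derivatives exist everywhere.\<close>
definition smooth_map :: "(real^2 \<Rightarrow> real^2) \<Rightarrow> bool" where
  "smooth_map F \<longleftrightarrow> (\<forall>vs x. dirderiv F vs differentiable (at x))"

text \<open>Lifts to the plane of C-infinity diffeomorphisms of the torus R^2/Z^2: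
  C-infinity diffeomorphisms of R^2 such that both the map and its inverse
  descend to the torus.\<close>
definition torus_diffeo_lift :: "(real^2 \<Rightarrow> real^2) \<Rightarrow> bool" where
  "torus_diffeo_lift H \<longleftrightarrow> bij H \<and> smooth_map H \<and> smooth_map (inv H) \<and>
     (\<forall>x m. m \<in> Z2 \<longrightarrow> H (x + m) - H x \<in> Z2) \<and>
     (\<forall>x m. m \<in> Z2 \<longrightarrow> inv H (x + m) - inv H x \<in> Z2)"

text \<open>F is a lift of an element of the C-infinity closure of the set of maps
  conjugate (by torus diffeomorphisms) to rotations: F is the C-infinity limit
  (uniform convergence of all derivatives) of lifts of such conjugates.
  The lifts of h o R_theta o h^-1 are exactly the maps H o (+t) o H^-1.\<close>
definition in_Obar_lift :: "(real^2 \<Rightarrow> real^2) \<Rightarrow> bool" where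
  "in_Obar_lift F \<longleftrightarrow>
     (\<exists>H :: nat \<Rightarrow> real^2 \<Rightarrow> real^2. \<exists>t :: nat \<Rightarrow> real^2.
        (\<forall>n. torus_diffeo_lift (H n)) \<and>
        (\<forall>vs. uniform_limit UNIV
                (\<lambda>n. dirderiv (H n \<circ> (\<lambda>x. x + t n) \<circ> inv (H n)) vs)
                (dirderiv F vs) sequentially))"

section \<open>Hausdorff distance, homothety classes\<close>

definition hausdorff_dist :: "(real^2) set \<Rightarrow> (real^2) set \<Rightarrow> real" where
  "hausdorff_dist A B = max (SUP a\<in>A. infdist a B) (SUP b\<in>B. infdist b A)"

definition homothety_class :: "(real^2) set \<Rightarrow> (real^2) set set" where
  "homothety_class K = {L. \<exists>c v. c > 0 \<and> L = (\<lambda>x. v + c *\<^sub>R x) ` K}"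

text \<open>The space H: classes of non-empty compact sets modulo translations and
  positive homotheties.\<close>
definition homothety_types :: "(real^2) set set set" where
  "homothety_types = {homothety_class K | K. compact K \<and> K \<noteq> {}}"

definition normalize :: "(real^2) set \<Rightarrow> (real^2) set" where
  "normalize K = (\<lambda>x. (1 / diameter K) *\<^sub>R x) ` K"

definition LA :: "real \<Rightarrow> (real^2) set set \<Rightarrow> (real^2) set set" where
  "LA r \<Gamma> = {K. diameter K > r \<and>
      (\<exists>G\<in>\<Gamma>. diameter G = 1 \<and> hausdorff_dist (normalize K) G < 1 / r)}"

definition D :: "(real^2) set" where
  "D = cbox 0 1"

definition P_k :: "nat \<Rightarrow> (real^2) set set \<Rightarrow> (real^2 \<Rightarrow> real^2) \<Rightarrow> bool" where
  "P_k k \<Gamma> F \<longleftrightarrow> in_Obar_lift F \<and> (\<exists>n\<ge>1. (F ^^ n) ` D \<in> LA (real k) \<Gamma>)"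

definition P :: "(real^2) set set \<Rightarrow> (real^2 \<Rightarrow> real^2) \<Rightarrow> bool" where
  "P \<Gamma> F \<longleftrightarrow> (\<forall>k\<ge>1. P_k k \<Gamma> F)"

text \<open>Generalized rotation set (w.r.t. the lift F and base point x0).\<close>
definition generalized_rotation_set ::
    "(real^2 \<Rightarrow> real^2) \<Rightarrow> real^2 \<Rightarrow> (real^2) set \<Rightarrow> bool" where
  "generalized_rotation_set F x0 L \<longleftrightarrow> compact L \<and> L \<noteq> {} \<and>
     (\<exists>n :: nat \<Rightarrow> nat.
        filterlim (\<lambda>i. diameter ((F ^^ n i) ` D)) at_top sequentially \<and>
        ((\<lambda>i. hausdorff_dist
               ((\<lambda>y. (1 / diameter ((F ^^ n i) ` D)) *\<^sub>R (y - (F ^^ n i) x0)) ` ((F ^^ n i) ` D))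
               L) \<longlonglongrightarrow> 0))"

end

theory Submission
  imports Defs
begin

lemma bdd_infdist:
  fixes A B :: "(real^2) set"
  assumes "bounded A" "B \<noteq> {}"
  shows "bdd_above ((\<lambda>a. infdist a B) ` A)"
proof -
  obtain b where b: "b \<in> B" using assms by blast
  obtain R where R: "\<forall>x\<in>A. norm x \<le> R" using assms(1) bounded_iff by blast
  have "infdist a B \<le> R + norm b" if "a \<in> A" for a
  proof -
    have "infdist a B \<le> dist a b" by (rule infdist_le[OF b])
    also have "\<dots> \<le> norm a + norm b" by (simp add: dist_norm norm_triangle_ineq4)
    finally show ?thesis using R that by auto
  qed
  then show ?thesis by (auto simp: bdd_above_def)
qed

lemma hd_point1:
  fixes A B :: "(real^2) set"
  assumes "bounded A" "B \<noteq> {}" "hausdorff_dist A B < e" "x \<in> A"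
  shows "\<exists>y\<in>B. dist x y < e"
proof -
  have "infdist x B \<le> (SUP a\<in>A. infdist a B)"
    by (rule cSUP_upper[OF assms(4) bdd_infdist[OF assms(1,2)]])
  also have "\<dots> \<le> hausdorff_dist A B" unfolding hausdorff_dist_def by simp
  finally have "infdist x B < e" using assms(3) by simp
  then have "(INF y\<in>B. dist x y) < e" using infdist_notempty[OF assms(2)] by simp
  then show ?thesis
    using cINF_less_iff[OF assms(2), of "dist x" e] by (auto simp: bdd_below_def intro: zero_le_dist)
qed

lemma hd_point2:
  fixes A B :: "(real^2) set"
  assumes "bounded B" "A \<noteq> {}" "hausdorff_dist A B < e" "y \<in> B"
  shows "\<exists>x\<in>A. dist y x < e"
proof -
  have "infdist y A \<le> (SUP b\<in>B. infdist b A)"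
    by (rule cSUP_upper[OF assms(4) bdd_infdist[OF assms(1,2)]])
  also have "\<dots> \<le> hausdorff_dist A B" unfolding hausdorff_dist_def by simp
  finally have "infdist y A < e" using assms(3) by simp
  then have "(INF x\<in>A. dist y x) < e" using infdist_notempty[OF assms(2)] by simp
  then show ?thesis
    using cINF_less_iff[OF assms(2), of "dist y" e] by (auto simp: bdd_below_def intro: zero_le_dist)
qed

lemma hd_le:
  fixes A B :: "(real^2) set"
  assumes "A \<noteq> {}" "B \<noteq> {}"
    "\<forall>x\<in>A. \<exists>y\<in>B. dist x y \<le> e" "\<forall>y\<in>B. \<exists>x\<in>A. dist y x \<le> e"
  shows "hausdorff_dist A B \<le> e"
proof -
  have "(SUP a\<in>A. infdist a B) \<le> e"
    using assms(1,3) by (intro cSUP_least) (auto intro: infdist_le2)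
  moreover have "(SUP b\<in>B. infdist b A) \<le> e"
    using assms(2,4) by (intro cSUP_least) (auto intro: infdist_le2)
  ultimately show ?thesis unfolding hausdorff_dist_def by simp
qed

lemma hd_nonneg:
  fixes A B :: "(real^2) set"
  assumes "bounded A" "A \<noteq> {}" "B \<noteq> {}"
  shows "0 \<le> hausdorff_dist A B"
proof -
  obtain a where a: "a \<in> A" using assms by blast
  have "0 \<le> infdist a B" by (rule infdist_nonneg)
  also have "\<dots> \<le> (SUP a\<in>A. infdist a B)"
    by (rule cSUP_upper[OF a bdd_infdist[OF assms(1,3)]])
  also have "\<dots> \<le> hausdorff_dist A B" unfolding hausdorff_dist_def by simp
  finally show ?thesis .
qed

lemma diam_affine:
  fixes K :: "(real^2) set"
  assumes "compact K" "K \<noteq> {}" "c > 0"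
  shows "diameter ((\<lambda>x. v + c *\<^sub>R x) ` K) = c * diameter K"
proof -
  let ?f = "\<lambda>x. v + c *\<^sub>R x"
  have cf: "continuous_on UNIV ?f" by (intro continuous_intros)
  have ci: "compact (?f ` K)" using compact_continuous_image[OF continuous_on_subset[OF cf] assms(1)] by auto
  have df: "dist (?f x) (?f y) = c * dist x y" for x y
    using assms(3) by (simp add: dist_norm scaleR_diff_right[symmetric])
  obtain x y where xy: "x \<in> K" "y \<in> K" "dist x y = diameter K"
    using diameter_compact_attained[OF assms(1,2)] by blast
  obtain x' y' where xy': "x' \<in> ?f ` K" "y' \<in> ?f ` K" "dist x' y' = diameter (?f ` K)"
    using diameter_compact_attained[OF ci] assms(2) by blast
  have "c * diameter K \<le> diameter (?f ` K)"
    using diameter_bounded_bound[OF compact_imp_bounded[OF ci], of "?f x" "?f y"] xy df by auto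
  moreover have "diameter (?f ` K) \<le> c * diameter K"
  proof -
    from xy' obtain x2 y2 where "x2 \<in> K" "y2 \<in> K" "x' = ?f x2" "y' = ?f y2" by auto
    then show ?thesis
      using xy' df diameter_bounded_bound[OF compact_imp_bounded[OF assms(1)], of x2 y2] assms(3)
      by (metis mult_left_mono less_imp_le)
  qed
  ultimately show ?thesis by simp
qed

lemma hc_affine:
  fixes K :: "(real^2) set"
  assumes "c > 0"
  shows "homothety_class ((\<lambda>x. w + c *\<^sub>R x) ` K) = homothety_class K"
proof
  show "homothety_class ((\<lambda>x. w + c *\<^sub>R x) ` K) \<subseteq> homothety_class K"
  proof
    fix M assume "M \<in> homothety_class ((\<lambda>x. w + c *\<^sub>R x) ` K)"
    then obtain c' v where cv: "c' > 0" "M = (\<lambda>x. v + c' *\<^sub>R x) ` ((\<lambda>x. w + c *\<^sub>R x) ` K)"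
      unfolding homothety_class_def by blast
    have "M = (\<lambda>x. (v + c' *\<^sub>R w) + (c' * c) *\<^sub>R x) ` K"
      unfolding cv image_image by (simp add: algebra_simps)
    moreover have "c' * c > 0" using cv assms by simp
    ultimately show "M \<in> homothety_class K" unfolding homothety_class_def by blast
  qed
next
  show "homothety_class K \<subseteq> homothety_class ((\<lambda>x. w + c *\<^sub>R x) ` K)"
  proof
    fix M assume "M \<in> homothety_class K"
    then obtain c' v where cv: "c' > 0" "M = (\<lambda>x. v + c' *\<^sub>R x) ` K"
      unfolding homothety_class_def by blast
    have "M = (\<lambda>x. (v - (c' / c) *\<^sub>R w) + (c' / c) *\<^sub>R x) ` ((\<lambda>x. w + c *\<^sub>R x) ` K)"
      unfolding cv image_image using assms by (simp add: algebra_simps)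
    moreover have "c' / c > 0" using cv assms by simp
    ultimately show "M \<in> homothety_class ((\<lambda>x. w + c *\<^sub>R x) ` K)"
      unfolding homothety_class_def by blast
  qed
qed

lemma obar_cont:
  assumes "in_Obar_lift F"
  shows "continuous_on UNIV F"
proof -
  obtain H :: "nat \<Rightarrow> real^2 \<Rightarrow> real^2" and t where
    H: "\<forall>n. torus_diffeo_lift (H n)"
    and U: "\<forall>vs. uniform_limit UNIV (\<lambda>n. dirderiv (H n \<circ> (\<lambda>x. x + t n) \<circ> inv (H n)) vs)
                (dirderiv F vs) sequentially"
    using assms unfolding in_Obar_lift_def by blast
  have U0: "uniform_limit UNIV (\<lambda>n. H n \<circ> (\<lambda>x. x + t n) \<circ> inv (H n)) F sequentially"
    using U[rule_format, of "[]"] by simp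
  have sm: "continuous_on UNIV G" if "smooth_map G" for G :: "real^2 \<Rightarrow> real^2"
  proof -
    have "G differentiable at x" for x
      using that unfolding smooth_map_def by (metis dirderiv.simps(1))
    then show ?thesis
      by (intro differentiable_imp_continuous_on differentiable_at_imp_differentiable_on) auto
  qed
  have "continuous_on UNIV (H n \<circ> (\<lambda>x. x + t n) \<circ> inv (H n))" for n
  proof -
    have c1: "continuous_on UNIV (H n)" "continuous_on UNIV (inv (H n))"
      using H sm unfolding torus_diffeo_lift_def by auto
    have c2: "continuous_on UNIV (\<lambda>x::real^2. x + t n)" by (intro continuous_intros)
    show ?thesis
      using continuous_on_compose[OF continuous_on_compose[OF c1(2) continuous_on_subset[OF c2]]
          continuous_on_subset[OF c1(1)]]
      by (simp add: comp_assoc)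
  qed
  then show ?thesis
    by (intro uniform_limit_theorem[OF _ U0]) auto
qed

theorem mainTheorem8:
  fixes \<Gamma> :: "(real^2) set set" and F :: "real^2 \<Rightarrow> real^2" and x0 :: "real^2"
  assumes "\<Gamma> \<in> homothety_types"
    and "x0 \<in> D"
    and "P \<Gamma> F"
  shows "\<exists>L. generalized_rotation_set F x0 L \<and> homothety_class L = \<Gamma>"
proof -
  obtain K where K: "compact K" "K \<noteq> {}" "\<Gamma> = homothety_class K"
    using assms(1) unfolding homothety_types_def by blast
  have Pk: "\<And>k. k \<ge> 1 \<Longrightarrow> P_k k \<Gamma> F" using assms(3) unfolding P_def by blast
  have "in_Obar_lift F" using Pk[of 1] unfolding P_k_def by simp
  then have contF: "continuous_on UNIV F" by (rule obar_cont)
  have contFn: "continuous_on UNIV (F ^^ n)" for n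
  proof (induction n)
    case 0 then show ?case by (simp add: continuous_on_id)
  next
    case (Suc n)
    then show ?case
      using continuous_on_compose[OF Suc continuous_on_subset[OF contF]] by simp
  qed
  have cD: "compact D" unfolding D_def by simp
  have cX: "compact ((F ^^ n) ` D)" for n
    using compact_continuous_image[OF continuous_on_subset[OF contFn] cD] by auto
  have neX: "(F ^^ n) ` D \<noteq> {}" for n using assms(2) by auto
  have "\<forall>j::nat. \<exists>n G. diameter ((F ^^ n) ` D) > real (Suc j) \<and> G \<in> \<Gamma> \<and> diameter G = 1 \<and>
          hausdorff_dist (normalize ((F ^^ n) ` D)) G < 1 / real (Suc j)"
  proof
    fix j :: nat
    have "P_k (Suc j) \<Gamma> F" using Pk by simp
    then obtain n where "(F ^^ n) ` D \<in> LA (real (Suc j)) \<Gamma>" unfolding P_k_def by blast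
    then show "\<exists>n G. diameter ((F ^^ n) ` D) > real (Suc j) \<and> G \<in> \<Gamma> \<and> diameter G = 1 \<and>
          hausdorff_dist (normalize ((F ^^ n) ` D)) G < 1 / real (Suc j)"
      unfolding LA_def by blast
  qed
  then obtain nn GG where nG: "\<And>j. diameter ((F ^^ nn j) ` D) > real (Suc j)"
    "\<And>j. GG j \<in> \<Gamma>" "\<And>j. diameter (GG j) = 1"
    "\<And>j. hausdorff_dist (normalize ((F ^^ nn j) ` D)) (GG j) < 1 / real (Suc j)"
    by metis
  define c0 where "c0 = 1 / diameter K"
  have "\<forall>j. \<exists>v. GG j = (\<lambda>x. v + c0 *\<^sub>R x) ` K"
  proof
    fix j
    obtain c v where cv: "c > 0" "GG j = (\<lambda>x. v + c *\<^sub>R x) ` K"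
      using nG(2)[of j] K(3) unfolding homothety_class_def by blast
    have "c * diameter K = 1" using nG(3)[of j] diam_affine[OF K(1,2) cv(1), of v] cv(2) by simp
    moreover have "diameter K \<noteq> 0" using \<open>c * diameter K = 1\<close> by auto
    ultimately have "c = c0" unfolding c0_def by (simp add: eq_divide_eq)
    then show "\<exists>v. GG j = (\<lambda>x. v + c0 *\<^sub>R x) ` K" using cv by blast
  qed
  then obtain vv where vv: "\<And>j. GG j = (\<lambda>x. vv j + c0 *\<^sub>R x) ` K" by metis
  have c0pos: "c0 > 0"
  proof -
    obtain c v where cv: "c > 0" "GG 0 = (\<lambda>x. v + c *\<^sub>R x) ` K"
      using nG(2)[of 0] K(3) unfolding homothety_class_def by blast
    have "c * diameter K = 1" using nG(3)[of 0] diam_affine[OF K(1,2) cv(1), of v] cv(2) by simp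
    then have "diameter K \<noteq> 0" by auto
    then have "diameter K > 0" using diameter_ge_0[OF compact_imp_bounded[OF K(1)]] by linarith
    then show ?thesis unfolding c0_def by simp
  qed
  define X where "X j = (F ^^ nn j) ` D" for j
  define d where "d j = diameter (X j)" for j
  define p where "p j = (F ^^ nn j) x0" for j
  define a where "a j = (1 / d j) *\<^sub>R p j" for j
  define w where "w j = vv j - a j" for j
  have dpos: "d j > real (Suc j)" for j using nG(1) unfolding d_def X_def by simp
  have normX: "normalize (X j) = (\<lambda>y. (1 / d j) *\<^sub>R y) ` X j" for j
    unfolding normalize_def d_def by simp
  have bnX: "bounded (normalize (X j))" for j
  proof -
    have "compact ((\<lambda>y. (1 / d j) *\<^sub>R y) ` X j)"
      unfolding X_def by (intro compact_scaling cX)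
    then show ?thesis unfolding normX by (rule compact_imp_bounded)
  qed
  have neN: "normalize (X j) \<noteq> {}" for j unfolding normX using neX[of "nn j"] by (simp add: X_def)
  have neG: "GG j \<noteq> {}" for j using vv K(2) by simp
  have bG: "bounded (GG j)" for j
  proof -
    have "compact (GG j)" unfolding vv
      by (rule compact_continuous_image[OF _ K(1)]) (intro continuous_intros)
    then show ?thesis by (rule compact_imp_bounded)
  qed
  have hdj: "hausdorff_dist (normalize (X j)) (GG j) < 1 / real (Suc j)" for j
    using nG(4) unfolding X_def by simp
  obtain R where R: "\<forall>x\<in>K. norm x \<le> R" using compact_imp_bounded[OF K(1)] bounded_iff by blast
  have wb: "w j \<in> cball 0 (1 + c0 * R)" for j
  proof -
    have "a j \<in> normalize (X j)" unfolding normX using assms(2) by (auto simp: a_def p_def X_def)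
    then obtain g where g: "g \<in> GG j" "dist (a j) g < 1 / real (Suc j)"
      using hd_point1[OF bnX neG hdj] by blast
    then obtain k where k: "k \<in> K" "g = vv j + c0 *\<^sub>R k" using vv by auto
    have "w j = (g - a j) - c0 *\<^sub>R k" unfolding w_def k by simp
    then have "norm (w j) \<le> norm (g - a j) + norm (c0 *\<^sub>R k)" using norm_triangle_ineq4[of "g - a j" "c0 *\<^sub>R k"] by simp
    moreover have "norm (g - a j) \<le> 1"
    proof -
      have "1 / real (Suc j) \<le> 1" by simp
      moreover have "norm (g - a j) < 1 / real (Suc j)" using g(2) by (simp add: dist_norm norm_minus_commute)
      ultimately show ?thesis by linarith
    qed
    moreover have "norm (c0 *\<^sub>R k) \<le> c0 * R" using R k(1) c0pos by (simp add: mult_left_mono)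
    ultimately show ?thesis by simp
  qed
  obtain winf r where r: "strict_mono r" "(w \<circ> r) \<longlonglongrightarrow> winf"
  proof -
    have "range w \<subseteq> cball 0 (1 + c0 * R)" using wb by auto
    then have "bounded (range w)" using bounded_cball bounded_subset by blast
    then show ?thesis using bounded_imp_convergent_subsequence that by blast
  qed
  define L where "L = (\<lambda>x. winf + c0 *\<^sub>R x) ` K"
  have cL: "compact L" unfolding L_def
    by (rule compact_continuous_image[OF _ K(1)]) (intro continuous_intros)
  have neL: "L \<noteq> {}" unfolding L_def using K(2) by simp
  define S where "S j = (\<lambda>y. (1 / d j) *\<^sub>R (y - p j)) ` X j" for j
  have bS: "bounded (S j)" for j
  proof -
    have "compact (S j)" unfolding S_def X_def
      by (rule compact_continuous_image[OF _ cX]) (intro continuous_intros)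
    then show ?thesis by (rule compact_imp_bounded)
  qed
  have neS: "S j \<noteq> {}" for j unfolding S_def X_def using neX by simp
  have key: "hausdorff_dist (S j) L \<le> 1 / real (Suc j) + norm (w j - winf)" for j
  proof (rule hd_le[OF neS neL])
    show "\<forall>x\<in>S j. \<exists>y\<in>L. dist x y \<le> 1 / real (Suc j) + norm (w j - winf)"
    proof
      fix x assume "x \<in> S j"
      then obtain y where y: "y \<in> X j" "x = (1 / d j) *\<^sub>R (y - p j)" unfolding S_def by auto
      define z where "z = (1 / d j) *\<^sub>R y"
      have "z \<in> normalize (X j)" unfolding normX z_def using y(1) by auto
      then obtain g where g: "g \<in> GG j" "dist z g < 1 / real (Suc j)"
        using hd_point1[OF bnX neG hdj] by blast
      then obtain k where k: "k \<in> K" "g = vv j + c0 *\<^sub>R k" using vv by auto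
      have "x - (winf + c0 *\<^sub>R k) = (z - g) + (w j - winf)"
        unfolding y(2) z_def k w_def a_def by (simp add: algebra_simps)
      then have "dist x (winf + c0 *\<^sub>R k) \<le> norm (z - g) + norm (w j - winf)"
        unfolding dist_norm by (metis norm_triangle_ineq)
      moreover have "winf + c0 *\<^sub>R k \<in> L" unfolding L_def using k by auto
      moreover have "norm (z - g) < 1 / real (Suc j)" using g(2) by (simp add: dist_norm)
      ultimately have "dist x (winf + c0 *\<^sub>R k) \<le> 1 / real (Suc j) + norm (w j - winf)"
        by linarith
      then show "\<exists>y\<in>L. dist x y \<le> 1 / real (Suc j) + norm (w j - winf)"
        using \<open>winf + c0 *\<^sub>R k \<in> L\<close> by blast
    qed
    show "\<forall>l\<in>L. \<exists>x\<in>S j. dist l x \<le> 1 / real (Suc j) + norm (w j - winf)"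
    proof
      fix l assume "l \<in> L"
      then obtain k where k: "k \<in> K" "l = winf + c0 *\<^sub>R k" unfolding L_def by auto
      define g where "g = vv j + c0 *\<^sub>R k"
      have "g \<in> GG j" unfolding vv g_def using k by auto
      then obtain z where z: "z \<in> normalize (X j)" "dist g z < 1 / real (Suc j)"
        using hd_point2[OF bG neN hdj] by blast
      then obtain y where y: "y \<in> X j" "z = (1 / d j) *\<^sub>R y" unfolding normX by auto
      define x where "x = (1 / d j) *\<^sub>R (y - p j)"
      have xS: "x \<in> S j" unfolding S_def x_def using y(1) by auto
      have "l - x = (g - z) - (w j - winf)"
        unfolding y(2) x_def g_def k w_def a_def by (simp add: algebra_simps)
      then have "dist l x \<le> norm (g - z) + norm (w j - winf)"
        unfolding dist_norm by (metis norm_triangle_ineq4)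
      moreover have "norm (g - z) < 1 / real (Suc j)" using z(2) by (simp add: dist_norm)
      ultimately have "dist l x \<le> 1 / real (Suc j) + norm (w j - winf)" by linarith
      then show "\<exists>x\<in>S j. dist l x \<le> 1 / real (Suc j) + norm (w j - winf)"
        using xS by blast
    qed
  qed
  have "generalized_rotation_set F x0 L"
    unfolding generalized_rotation_set_def
  proof (intro conjI cL neL exI[of _ "nn \<circ> r"])
    have "real i \<le> diameter ((F ^^ (nn \<circ> r) i) ` D)" for i
    proof -
      have "real i \<le> real (r i)" using seq_suble[OF r(1)] by simp
      also have "\<dots> \<le> d (r i)" using dpos[of "r i"] by simp
      finally show ?thesis unfolding d_def X_def by simp
    qed
    then show "filterlim (\<lambda>i. diameter ((F ^^ (nn \<circ> r) i) ` D)) at_top sequentially"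
      by (intro filterlim_at_top_mono[OF filterlim_real_sequentially]) auto
    have Seq: "(\<lambda>y. (1 / diameter ((F ^^ (nn \<circ> r) i) ` D)) *\<^sub>R (y - (F ^^ (nn \<circ> r) i) x0)) `
               (F ^^ (nn \<circ> r) i) ` D = S (r i)" for i
      unfolding S_def d_def X_def p_def by simp
    have lim1: "(\<lambda>i. 1 / real (Suc (r i))) \<longlonglongrightarrow> 0"
    proof -
      have "(\<lambda>n. 1 / real (Suc n)) \<longlonglongrightarrow> (0::real)"
        using LIMSEQ_Suc[OF lim_inverse_n'] by simp
      from LIMSEQ_subseq_LIMSEQ[OF this r(1)] show ?thesis by (simp add: comp_def)
    qed
    have lim2: "(\<lambda>i. norm (w (r i) - winf)) \<longlonglongrightarrow> 0"
    proof -
      have "((\<lambda>i. (w \<circ> r) i - winf) \<longlonglongrightarrow> 0)" using LIM_zero[OF r(2)] .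
      then have "(\<lambda>i. norm ((w \<circ> r) i - winf)) \<longlonglongrightarrow> 0" by (rule tendsto_norm_zero)
      then show ?thesis by (simp add: comp_def)
    qed
    have "(\<lambda>i. hausdorff_dist (S (r i)) L) \<longlonglongrightarrow> 0"
    proof (rule tendsto_sandwich[OF _ _ tendsto_const])
      show "\<forall>\<^sub>F i in sequentially. 0 \<le> hausdorff_dist (S (r i)) L"
        using hd_nonneg[OF bS neS neL] by simp
      show "\<forall>\<^sub>F i in sequentially. hausdorff_dist (S (r i)) L \<le> 1 / real (Suc (r i)) + norm (w (r i) - winf)"
        using key by simp
      show "(\<lambda>i. 1 / real (Suc (r i)) + norm (w (r i) - winf)) \<longlonglongrightarrow> 0"
        using tendsto_add[OF lim1 lim2] by simp
    qed
    then show "(\<lambda>i. hausdorff_dist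
               ((\<lambda>y. (1 / diameter ((F ^^ (nn \<circ> r) i) ` D)) *\<^sub>R (y - (F ^^ (nn \<circ> r) i) x0)) ` ((F ^^ (nn \<circ> r) i) ` D))
               L) \<longlonglongrightarrow> 0"
      unfolding Seq .
  qed
  moreover have "homothety_class L = \<Gamma>" unfolding L_def K(3) by (rule hc_affine[OF c0pos])
  ultimately show ?thesis by blast
qed

end
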